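(* Let $q_1,q_2,q_3,q_4\in\widehat{\mathbb H}$ be four distinct points and let $q'_1,q'_2,q'_3\in\widehat{\mathbb H}$ be three distinct points. Then the set $$S=\{\pi(\gamma)(q_4):\gamma\in GL(2,\mathbb H),\ \pi(\gamma)(q_n)=q'_n,\ n=1,2,3\}\subset\widehat{\mathbb H}$$ is either a 2-sphere, a 2-plane, or a single point. Moreover, $S$ is a single point if and only if $Q(q_1,q_2,q_3,q_4)$ is real.
   Context: $\mathbb H$ denotes the quaternions, $\widehat{\mathbb H}=\mathbb H\cup\{\infty\}$, identified with $\mathbb R^4$ plus a point at infinity (2-spheres and 2-planes are meant in $\mathbb H\cong\mathbb R^4$). $GL(2,\mathbb H)$ acts on $\widehat{\mathbb H}$ by $\pi(\gamma)(q)=(aq+b)(cq+d)^{-1}$ for $\gamma=\begin{pmatrix}a&b\\c&d\end{pmatrix}$. For four distinct points the cross-ratio is $Q(q_1,q_2,q_3,q_4)=(q_2-q_1)^{-1}(q_4-q_1)(q_4-q_3)^{-1}(q_2-q_3)$, defined by taking limits if some $q_n=\infty$. *)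

theory Defs
  imports "HOL-Analysis.Analysis"
begin

text \<open>Quaternions via Cayley--Dickson: the pair (a,b) of complex numbers stands for
  a + b j.  Writing a = x0 + x1 i, b = x2 + x3 i gives q = x0 + x1 i + x2 j + x3 k, so the
  Euclidean structure of complex \<times> complex is exactly that of R^4 = H.\<close>

type_synonym quat = "complex \<times> complex"

definition qmul :: "quat \<Rightarrow> quat \<Rightarrow> quat" where
  "qmul p q = (fst p * fst q - snd p * cnj (snd q), fst p * snd q + snd p * cnj (fst q))"

definition qinv :: "quat \<Rightarrow> quat" where
  "qinv q = (let n = complex_of_real ((cmod (fst q))\<^sup>2 + (cmod (snd q))\<^sup>2)
             in (cnj (fst q) / n, - snd q / n))"

definition qone :: quat where "qone = (1, 0)"

definition is_real_quat :: "quat \<Rightarrow> bool" where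
  "is_real_quat q \<longleftrightarrow> snd q = 0 \<and> Im (fst q) = 0"

datatype hq = Fin quat | Inf

text \<open>2x2 quaternionic matrices (a,b,c,d) = [[a,b],[c,d]].\<close>
type_synonym qmat = "quat \<times> quat \<times> quat \<times> quat"

definition qmat_mul :: "qmat \<Rightarrow> qmat \<Rightarrow> qmat" where
  "qmat_mul M N = (case M of (a,b,c,d) \<Rightarrow> case N of (e,f,g,h) \<Rightarrow>
     (qmul a e + qmul b g, qmul a f + qmul b h, qmul c e + qmul d g, qmul c f + qmul d h))"

definition qmat_id :: qmat where "qmat_id = (qone, 0, 0, qone)"

definition GL2H :: "qmat set" where
  "GL2H = {M. \<exists>N. qmat_mul M N = qmat_id \<and> qmat_mul N M = qmat_id}"

fun mobius :: "qmat \<Rightarrow> hq \<Rightarrow> hq" where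
  "mobius (a,b,c,d) (Fin q) =
     (if qmul c q + d = 0 then Inf else Fin (qmul (qmul a q + b) (qinv (qmul c q + d))))"
| "mobius (a,b,c,d) Inf = (if c = 0 then Inf else Fin (qmul a (qinv c)))"

text \<open>Cross-ratio Q(q1,q2,q3,q4) = (q2-q1)^{-1}(q4-q1)(q4-q3)^{-1}(q2-q3), with the
  limiting values when one point is infinity (for q2 the limit along real q2).\<close>
fun crossratio :: "hq \<Rightarrow> hq \<Rightarrow> hq \<Rightarrow> hq \<Rightarrow> quat" where
  "crossratio (Fin q1) (Fin q2) (Fin q3) (Fin q4) =
     qmul (qmul (qmul (qinv (q2 - q1)) (q4 - q1)) (qinv (q4 - q3))) (q2 - q3)"
| "crossratio Inf (Fin q2) (Fin q3) (Fin q4) = qmul (qinv (q4 - q3)) (q2 - q3)"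
| "crossratio (Fin q1) Inf (Fin q3) (Fin q4) = qmul (q4 - q1) (qinv (q4 - q3))"
| "crossratio (Fin q1) (Fin q2) Inf (Fin q4) = qmul (qinv (q2 - q1)) (q4 - q1)"
| "crossratio (Fin q1) (Fin q2) (Fin q3) Inf = qmul (qinv (q2 - q1)) (q2 - q3)"
| "crossratio _ _ _ _ = undefined"

definition is_2sphere :: "hq set \<Rightarrow> bool" where
  "is_2sphere S \<longleftrightarrow> (\<exists>c r A. 0 < r \<and> affine A \<and> aff_dim A = 3 \<and> c \<in> A \<and>
                        S = Fin ` (sphere c r \<inter> A))"

definition is_2plane :: "hq set \<Rightarrow> bool" where
  "is_2plane S \<longleftrightarrow> (\<exists>P. affine P \<and> aff_dim P = 2 \<and> S = insert Inf (Fin ` P))"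

end

theory Submission
  imports Defs
begin

typedef H = "UNIV :: quat set" morphisms toq ofq by auto
setup_lifting type_definition_H

lemma cnorm_aux:
  assumes "(a::complex) \<noteq> 0 \<or> b \<noteq> 0"
  shows "a * cnj a / ((complex_of_real (cmod a))\<^sup>2 + (complex_of_real (cmod b))\<^sup>2) +
         b * cnj b / ((complex_of_real (cmod a))\<^sup>2 + (complex_of_real (cmod b))\<^sup>2) = 1"
proof -
  have e1: "a * cnj a = (complex_of_real (cmod a))\<^sup>2" by (metis complex_norm_square of_real_power)
  have e2: "b * cnj b = (complex_of_real (cmod b))\<^sup>2" by (metis complex_norm_square of_real_power)
  have "(cmod a)\<^sup>2 + (cmod b)\<^sup>2 \<noteq> 0" using assms by (auto simp: add_nonneg_eq_0_iff)
  then have nz: "(complex_of_real (cmod a))\<^sup>2 + (complex_of_real (cmod b))\<^sup>2 \<noteq> 0"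
    by (metis of_real_add of_real_eq_0_iff of_real_power)
  show ?thesis unfolding e1 e2 using nz by (simp add: add_divide_distrib[symmetric])
qed

instantiation H :: division_ring
begin
lift_definition zero_H :: H is "0::quat" .
lift_definition one_H :: H is "qone" .
lift_definition plus_H :: "H \<Rightarrow> H \<Rightarrow> H" is "(+)" .
lift_definition minus_H :: "H \<Rightarrow> H \<Rightarrow> H" is "(-)" .
lift_definition uminus_H :: "H \<Rightarrow> H" is "uminus" .
lift_definition times_H :: "H \<Rightarrow> H \<Rightarrow> H" is "qmul" .
lift_definition inverse_H :: "H \<Rightarrow> H" is "qinv" .
definition divide_H :: "H \<Rightarrow> H \<Rightarrow> H" where "divide_H x y = x * inverse y"
instance
proof
  fix a b c :: H
  show "a * b * c = a * (b * c)"
    by transfer (auto simp: qmul_def algebra_simps)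
  show "1 * a = a" by transfer (auto simp: qmul_def qone_def)
  show "a * 1 = a" by transfer (auto simp: qmul_def qone_def)
  show "(a + b) * c = a * c + b * c" by transfer (auto simp: qmul_def algebra_simps)
  show "a * (b + c) = a * b + a * c" by transfer (auto simp: qmul_def algebra_simps)
  show "a + b + c = a + (b + c)" by transfer (auto simp: algebra_simps)
  show "a + b = b + a" by transfer (auto simp: algebra_simps)
  show "0 + a = a" by transfer auto
  show "- a + a = 0" by transfer auto
  show "a - b = a + - b" by transfer auto
  show "(0::H) \<noteq> 1" by transfer (auto simp: qone_def zero_prod_def)
  show "divide a b = a * inverse b" by (simp add: divide_H_def)
  show "inverse (0::H) = 0" by transfer (auto simp: qinv_def zero_prod_def)
  assume "a \<noteq> 0"
  then have nz: "(cmod (fst (toq a)))\<^sup>2 + (cmod (snd (toq a)))\<^sup>2 \<noteq> 0"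
    by transfer (auto simp: prod_eq_iff)
  show "inverse a * a = 1" using nz
    apply transfer
    by (auto simp: qmul_def qinv_def qone_def Let_def cnorm_aux algebra_simps)
  show "a * inverse a = 1" using nz
    apply transfer
    by (auto simp: qmul_def qinv_def qone_def Let_def cnorm_aux algebra_simps)
qed
end

lemmas toq_inverse' = ofq_inverse[simplified]
lemma ofq_toq' [simp]: "ofq (toq x) = x" by (rule toq_inverse)
lemma toq_ofq' [simp]: "toq (ofq q) = q" by (simp add: ofq_inverse)

lemma qmul_H: "qmul p q = toq (ofq p * ofq q)" by (simp add: times_H.rep_eq)
lemma qinv_H: "qinv p = toq (inverse (ofq p))" by (simp add: inverse_H.rep_eq)
lemma qplus_H: "p + q = toq (ofq p + ofq q)" by (simp add: plus_H.rep_eq)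
lemma qminus_H: "p - q = toq (ofq p - ofq q)" by (simp add: minus_H.rep_eq)
lemma qzero_H: "(0::quat) = toq 0" by (simp add: zero_H.rep_eq)
lemma qone_H: "qone = toq 1" by (simp add: one_H.rep_eq)
lemma toq_eq_iff [simp]: "toq x = toq y \<longleftrightarrow> x = y" by (simp add: toq_inject)
lemma toq_zero_iff [simp]: "toq x = 0 \<longleftrightarrow> x = 0" using toq_eq_iff[of x 0] by (simp add: zero_H.rep_eq)

type_synonym Hm = "H \<times> H \<times> H \<times> H"
fun tq :: "Hm \<Rightarrow> qmat" where "tq (A,B,C,D) = (toq A, toq B, toq C, toq D)"
fun oq :: "qmat \<Rightarrow> Hm" where "oq (a,b,c,d) = (ofq a, ofq b, ofq c, ofq d)"
lemma tq_oq [simp]: "tq (oq g) = g" by (cases g) auto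
lemma oq_tq [simp]: "oq (tq M) = M" by (cases M) auto
fun hmul :: "Hm \<Rightarrow> Hm \<Rightarrow> Hm" where
  "hmul (A,B,C,D) (E,F,G,K) = (A*E + B*G, A*F + B*K, C*E + D*G, C*F + D*K)"
definition hid :: Hm where "hid = (1,0,0,1)"
lemma tq_hmul: "qmat_mul (tq M) (tq N) = tq (hmul M N)"
  by (cases M; cases N) (simp add: qmat_mul_def qmul_H qplus_H)
lemma tq_hid: "qmat_id = tq hid" by (simp add: qmat_id_def hid_def qone_H qzero_H)
lemma hmul_assoc: "hmul (hmul M N) P = hmul M (hmul N P)"
  by (cases M; cases N; cases P) (simp add: algebra_simps)
lemma hmul_hid [simp]: "hmul M hid = M" "hmul hid M = M"
  by (cases M; simp add: hid_def)+

definition inv_m :: "Hm \<Rightarrow> bool" where "inv_m M \<longleftrightarrow> (\<exists>N. hmul M N = hid \<and> hmul N M = hid)"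
lemma GL2H_iff: "tq M \<in> GL2H \<longleftrightarrow> inv_m M"
proof
  assume "tq M \<in> GL2H"
  then obtain N where "qmat_mul (tq M) N = qmat_id" "qmat_mul N (tq M) = qmat_id" by (auto simp: GL2H_def)
  then have "tq (hmul M (oq N)) = tq hid" "tq (hmul (oq N) M) = tq hid"
    by (simp_all add: tq_hid flip: tq_hmul)
  then have "hmul M (oq N) = hid" "hmul (oq N) M = hid"
    by (metis oq_tq)+
  then show "inv_m M" unfolding inv_m_def by blast
next
  assume "inv_m M"
  then obtain N where "hmul M N = hid" "hmul N M = hid" unfolding inv_m_def by blast
  then have "qmat_mul (tq M) (tq N) = qmat_id" "qmat_mul (tq N) (tq M) = qmat_id"
    by (simp_all add: tq_hmul tq_hid)
  then show "tq M \<in> GL2H" unfolding GL2H_def by blast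
qed

lemma inv_m_mul:
  assumes "inv_m M" "inv_m N" shows "inv_m (hmul M N)"
proof -
  obtain M' where M: "hmul M M' = hid" "hmul M' M = hid" using assms(1) unfolding inv_m_def by blast
  obtain N' where N: "hmul N N' = hid" "hmul N' N = hid" using assms(2) unfolding inv_m_def by blast
  have "hmul (hmul M N) (hmul N' M') = hmul M (hmul (hmul N N') M')" by (simp only: hmul_assoc)
  also have "\<dots> = hid" using M N by simp
  finally have 1: "hmul (hmul M N) (hmul N' M') = hid" .
  have "hmul (hmul N' M') (hmul M N) = hmul N' (hmul (hmul M' M) N)" by (simp only: hmul_assoc)
  also have "\<dots> = hid" using M N by simp
  finally have 2: "hmul (hmul N' M') (hmul M N) = hid" .
  show ?thesis using 1 2 unfolding inv_m_def by blast
qed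

definition pt :: "H \<Rightarrow> hq" where "pt x = Fin (toq x)"
lemma pt_inj [simp]: "pt x = pt y \<longleftrightarrow> x = y" by (simp add: pt_def)
lemma pt_Inf [simp]: "pt x \<noteq> Inf" "Inf \<noteq> pt x" by (simp_all add: pt_def)
lemma hq_cases: "(\<And>x. P (pt x)) \<Longrightarrow> P Inf \<Longrightarrow> P y"
  by (cases y) (metis pt_def toq_ofq')+

lemma mob_pt: "mobius (toq A, toq B, toq C, toq D) (pt x) =
   (if C*x + D = 0 then Inf else pt ((A*x+B) * inverse (C*x+D)))"
  by (simp add: pt_def qmul_H qplus_H qinv_H)
lemma mob_Inf: "mobius (toq A, toq B, toq C, toq D) Inf = (if C = 0 then Inf else pt (A * inverse C))"
  by (simp add: pt_def qmul_H qinv_H)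

definition proj :: "H \<times> H \<Rightarrow> hq" where
  "proj z = (if snd z = 0 then Inf else pt (fst z * inverse (snd z)))"
fun act :: "Hm \<Rightarrow> H \<times> H \<Rightarrow> H \<times> H" where
  "act (A,B,C,D) (u,v) = (A * u + B * v, C * u + D * v)"
fun lift :: "hq \<Rightarrow> H \<times> H" where
  "lift (Fin q) = (ofq q, 1)" | "lift Inf = (1, 0)"
lemma proj_lift: "proj (lift x) = x"
  by (cases x) (auto simp: proj_def pt_def)
lemma lift_nz: "lift x \<noteq> (0,0)" by (cases x) auto

lemma mob_proj:
  assumes "z \<noteq> (0,0)"
  shows "mobius (tq M) (proj z) = proj (act M z)"
proof -
  obtain A B C D where M: "M = (A,B,C,D)" by (cases M) auto
  obtain u v where z: "z = (u,v)" by (cases z) auto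
  show ?thesis
  proof (cases "v = 0")
    case True
    then have "u \<noteq> 0" using assms z by auto
    then show ?thesis using True
      by (simp add: M z proj_def mob_Inf nonzero_inverse_mult_distrib mult.assoc[symmetric] del: mobius.simps)
        (simp add: mult.assoc)
  next
    case False
    have e: "C * (u * inverse v) + D = (C * u + D * v) * inverse v"
      using False by (simp add: algebra_simps)
    have e2: "A * (u * inverse v) + B = (A * u + B * v) * inverse v"
      using False by (simp add: algebra_simps)
    show ?thesis using False
      by (simp add: M z proj_def mob_pt e e2 nonzero_inverse_mult_distrib mult.assoc del: mobius.simps)
        (simp add: mult.assoc[symmetric])
  qed
qed

lemma act_hmul: "act (hmul M N) z = act M (act N z)"
  by (cases M; cases N; cases z) (simp add: algebra_simps)
lemma act_hid: "act hid z = z" by (cases z) (simp add: hid_def)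

lemma mob_hmul:
  assumes "inv_m N"
  shows "mobius (tq (hmul M N)) x = mobius (tq M) (mobius (tq N) x)"
proof -
  obtain N' where N': "hmul N' N = hid" using assms by (auto simp: inv_m_def)
  have nz: "act N (lift x) \<noteq> (0,0)"
  proof
    assume "act N (lift x) = (0,0)"
    then have "act N' (act N (lift x)) = (0,0)" by (cases N') simp
    then show False using N' lift_nz[of x] act_hmul[of N' N "lift x"] act_hid[of "lift x"] by simp
  qed
  have "mobius (tq (hmul M N)) x = proj (act M (act N (lift x)))"
    using mob_proj[OF lift_nz, of "hmul M N" x] by (simp add: proj_lift act_hmul)
  also have "\<dots> = mobius (tq M) (mobius (tq N) x)"
    using mob_proj[OF nz, of M] mob_proj[OF lift_nz, of N x] by (simp add: proj_lift)
  finally show ?thesis .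
qed

lemma mob_hid: "mobius (tq hid) x = x"
  using mob_proj[OF lift_nz, of hid x] by (simp add: proj_lift act_hid)


definition ofr :: "real \<Rightarrow> H" where "ofr r = ofq (complex_of_real r, 0)"
definition cj :: "H \<Rightarrow> H" where "cj x = ofq (cnj (fst (toq x)), - snd (toq x))"
definition nrm :: "H \<Rightarrow> real" where "nrm x = norm (toq x)"
definition rl :: "H \<Rightarrow> bool" where "rl x \<longleftrightarrow> is_real_quat (toq x)"

lemma toq_mult: "toq (x * y) = qmul (toq x) (toq y)" by (simp add: times_H.rep_eq)
lemma toq_add: "toq (x + y) = toq x + toq y" by (simp add: plus_H.rep_eq)
lemma toq_diff: "toq (x - y) = toq x - toq y" by (simp add: minus_H.rep_eq)
lemma toq_uminus: "toq (- y) = - toq y" by (simp add: uminus_H.rep_eq)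
lemma toq_0: "toq 0 = 0" by (simp add: zero_H.rep_eq)
lemma toq_1: "toq 1 = (1,0)" by (simp add: one_H.rep_eq qone_def)
lemma toq_ofr: "toq (ofr r) = (complex_of_real r, 0)" by (simp add: ofr_def)
lemma H_eq_iff: "x = y \<longleftrightarrow> fst (toq x) = fst (toq y) \<and> snd (toq x) = snd (toq y)"
  by (metis prod_eq_iff toq_eq_iff)

lemmas toq_simps = toq_mult toq_add toq_diff toq_uminus toq_0 toq_1 toq_ofr

lemma ofr_comm: "ofr r * x = x * ofr r"
  by (simp add: H_eq_iff toq_simps qmul_def)
lemma ofr_add: "ofr (r + s) = ofr r + ofr s" by (simp add: H_eq_iff toq_simps)
lemma ofr_diff: "ofr (r - s) = ofr r - ofr s" by (simp add: H_eq_iff toq_simps)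
lemma ofr_mult: "ofr (r * s) = ofr r * ofr s" by (simp add: H_eq_iff toq_simps qmul_def)
lemma ofr_1 [simp]: "ofr 1 = 1" by (simp add: H_eq_iff toq_simps)
lemma ofr_0 [simp]: "ofr 0 = 0" by (simp add: H_eq_iff toq_simps)
lemma ofr_inj [simp]: "ofr r = ofr s \<longleftrightarrow> r = s" by (simp add: H_eq_iff toq_simps)
lemma ofr_eq_0 [simp]: "ofr r = 0 \<longleftrightarrow> r = 0" by (metis ofr_0 ofr_inj)
lemma ofr_inverse: "inverse (ofr r) = ofr (inverse r)"
proof (cases "r = 0")
  case False
  then have "ofr r * ofr (inverse r) = 1" by (simp flip: ofr_mult)
  then show ?thesis by (metis False inverse_unique ofr_eq_0)
qed simp

lemma rl_iff: "rl x \<longleftrightarrow> (\<exists>r. x = ofr r)"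
proof
  assume "rl x"
  then have "x = ofr (Re (fst (toq x)))"
    unfolding rl_def is_real_quat_def by (simp add: H_eq_iff toq_ofr complex_eq_iff)
  then show "\<exists>r. x = ofr r" ..
next
  assume "\<exists>r. x = ofr r"
  then show "rl x" by (auto simp: rl_def is_real_quat_def toq_ofr)
qed

lemma cj_mult: "cj (x * y) = cj y * cj x"
  by (simp add: H_eq_iff toq_simps qmul_def cj_def algebra_simps)
lemma cj_add: "cj (x + y) = cj x + cj y"
  by (simp add: H_eq_iff toq_simps cj_def algebra_simps)
lemma cj_ofr: "cj (ofr r) = ofr r" by (simp add: H_eq_iff toq_simps cj_def)
lemma cj_cj: "cj (cj x) = x" by (simp add: H_eq_iff toq_simps cj_def)

lemma cnorm2: "a * cnj a = (complex_of_real (cmod a))\<^sup>2"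
  by (metis complex_norm_square of_real_power)

lemma mult_cj: "x * cj x = ofr ((nrm x)\<^sup>2)"
proof -
  obtain a b where ab: "toq x = (a,b)" by (cases "toq x") auto
  show ?thesis
    by (simp add: H_eq_iff toq_simps qmul_def cj_def ab nrm_def norm_prod_def algebra_simps cnorm2)
qed
lemma cj_mult_self: "cj x * x = ofr ((nrm x)\<^sup>2)"
proof -
  obtain a b where ab: "toq x = (a,b)" by (cases "toq x") auto
  show ?thesis
    by (simp add: H_eq_iff toq_simps qmul_def cj_def ab nrm_def norm_prod_def algebra_simps cnorm2)
qed

lemma nrm_mult: "nrm (x * y) = nrm x * nrm y"
proof -
  have "ofr ((nrm (x*y))\<^sup>2) = (x * y) * cj (x * y)" by (simp add: mult_cj)
  also have "\<dots> = x * (y * cj y) * cj x" by (simp add: cj_mult mult.assoc)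
  also have "\<dots> = ofr ((nrm y)\<^sup>2) * (x * cj x)"
    by (simp only: mult_cj ofr_comm[of "(nrm y)\<^sup>2" x, symmetric] mult.assoc)
  also have "\<dots> = ofr ((nrm x)\<^sup>2 * (nrm y)\<^sup>2)"
    by (simp add: mult_cj flip: ofr_mult)
  finally have "(nrm (x*y))\<^sup>2 = (nrm x * nrm y)\<^sup>2" by (simp add: power_mult_distrib)
  then show ?thesis by (simp add: nrm_def power2_eq_iff_nonneg)
qed
lemma nrm_0_iff [simp]: "nrm x = 0 \<longleftrightarrow> x = 0" by (simp add: nrm_def)
lemma nrm_1 [simp]: "nrm 1 = 1" by (simp add: nrm_def toq_1 norm_prod_def)
lemma nrm_inverse: "nrm (inverse x) = inverse (nrm x)"
proof (cases "x = 0")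
  case False
  have "nrm (inverse x) * nrm x = nrm (inverse x * x)" by (simp only: nrm_mult)
  also have "\<dots> = 1" using False by simp
  finally show ?thesis by (metis inverse_unique mult.commute)
qed (simp add: nrm_def toq_0)


definition re :: "H \<Rightarrow> H" where "re x = ofr (Re (fst (toq x)))"
definition pure :: "H \<Rightarrow> bool" where "pure x \<longleftrightarrow> Re (fst (toq x)) = 0"

lemma cj_pure: "pure u \<Longrightarrow> cj u = - u"
  by (simp add: pure_def H_eq_iff cj_def toq_simps complex_eq_iff)
lemma pure_sq: "pure u \<Longrightarrow> u * u = - ofr ((nrm u)\<^sup>2)"
  by (metis cj_pure mult_cj mult_minus_right minus_minus)
lemma cj_0 [simp]: "cj 0 = 0" by (simp add: H_eq_iff cj_def toq_0)
lemma nrm_0 [simp]: "nrm 0 = 0" by (simp add: nrm_def toq_0)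
lemma cj_inverse: "cj (inverse a) = inverse (cj a)"
proof (cases "a = 0")
  case True then show ?thesis by simp
next
  case False
  have "cj (inverse a) * cj a = 1" by (metis False cj_mult right_inverse cj_ofr ofr_1)
  then have "inverse (cj (inverse a)) = cj a" by (rule inverse_unique)
  then show ?thesis by (metis inverse_inverse_eq)
qed
lemma cj_eq: "a \<noteq> 0 \<Longrightarrow> cj a = ofr ((nrm a)\<^sup>2) * inverse a"
  by (metis cj_mult_self mult.assoc right_inverse mult_1_right)
lemma x_plus_cj: "x + cj x = ofr (2 * Re (fst (toq x)))"
  by (simp add: H_eq_iff cj_def toq_simps complex_eq_iff)

lemma ofr_conj: assumes "a \<noteq> 0" shows "a * ofr r * inverse a = ofr r"
proof -
  have "a * ofr r * inverse a = ofr r * (a * inverse a)" by (simp only: ofr_comm[of r a, symmetric] mult.assoc)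
  then show ?thesis using assms by simp
qed

lemma cj_conj:
  assumes "a \<noteq> 0"
  shows "cj (a * x * inverse a) = a * cj x * inverse a"
proof -
  let ?n = "ofr ((nrm a)\<^sup>2)"
  have n0: "?n \<noteq> 0" using assms by simp
  have "cj (a * x * inverse a) = inverse (cj a) * cj x * cj a"
    by (simp add: cj_mult cj_inverse mult.assoc)
  also have "\<dots> = (a * inverse ?n) * cj x * (?n * inverse a)"
    using assms n0 by (simp add: cj_eq nonzero_inverse_mult_distrib)
  also have "\<dots> = a * cj x * (inverse ?n * ?n) * inverse a"
    by (simp add: mult.assoc ofr_inverse ofr_comm[of _ "cj x"] ofr_comm[of _ "cj x * _"])
  also have "\<dots> = a * cj x * inverse a" using n0 by simp
  finally show ?thesis .
qed

lemma Re_conj: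
  assumes "a \<noteq> 0"
  shows "Re (fst (toq (a * x * inverse a))) = Re (fst (toq x))"
proof -
  have "a * (x + cj x) * inverse a = a * x * inverse a + cj (a * x * inverse a)"
    by (simp only: cj_conj[OF assms] distrib_left distrib_right)
  then have "ofr (2 * Re (fst (toq (a * x * inverse a)))) = a * (x + cj x) * inverse a"
    by (simp only: x_plus_cj)
  also have "\<dots> = ofr (2 * Re (fst (toq x)))" using assms by (simp add: x_plus_cj ofr_conj)
  finally show ?thesis by simp
qed

lemma nrm_conj: "a \<noteq> 0 \<Longrightarrow> nrm (a * x * inverse a) = nrm x"
  by (simp add: nrm_mult nrm_inverse)

definition orb :: "H \<Rightarrow> H set" where "orb w = {a * w * inverse a | a. a \<noteq> 0}"

lemma orb_real: "rl w \<Longrightarrow> orb w = {w}"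
  unfolding orb_def rl_iff by (auto simp: ofr_conj intro: exI[of _ 1])

lemma anticomm:
  assumes "pure u"
  shows "\<exists>a. a \<noteq> 0 \<and> a * u = - u * a"
proof -
  obtain al be where ab0: "toq u = (al, be)" by (cases "toq u") auto
  have "Re al = 0" using assms ab0 by (simp add: pure_def)
  then have al: "al = \<i> * complex_of_real (Im al)" by (simp add: complex_eq_iff)
  define t where "t = Im al"
  have ab: "toq u = (\<i> * complex_of_real t, be)" using ab0 al t_def by simp
  show ?thesis
  proof (cases "be = 0")
    case True
    show ?thesis
      by (rule exI[of _ "ofq (0,1)"])
         (simp add: H_eq_iff toq_simps qmul_def ab True)
  next
    case False
    show ?thesis
      by (rule exI[of _ "ofq (0, \<i> * be)"])
         (simp add: H_eq_iff toq_simps qmul_def ab False algebra_simps)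
  qed
qed

lemma conj_exists:
  assumes "pure u" "pure v" "nrm u = nrm v"
  shows "\<exists>a. a \<noteq> 0 \<and> a * u = v * a"
proof (cases "v + u = 0")
  case True
  then have "v = - u" by (simp add: eq_neg_iff_add_eq_0)
  then show ?thesis using anticomm[OF assms(1)] by auto
next
  case False
  let ?s = "ofr ((nrm u)\<^sup>2)"
  have vv: "v * v = - ?s" using pure_sq[OF assms(2)] assms(3) by simp
  have uu: "u * u = - ?s" using pure_sq[OF assms(1)] by simp
  show ?thesis
  proof (intro exI conjI)
    show "v * (v + u) \<noteq> 0"
    proof
      assume "v * (v + u) = 0"
      then have "v = 0" using False by simp
      then have "u = 0" using assms(3) by simp
      then show False using False \<open>v = 0\<close> by simp
    qed
    have "v * (v + u) * u = v * v * u + v * (u * u)" by (simp add: algebra_simps)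
    also have "\<dots> = - (?s * u) - ?s * v" by (simp add: vv uu ofr_comm)
    also have "\<dots> = v * (v * (v + u))" by (simp add: algebra_simps vv ofr_comm[of _ v] flip: mult.assoc)
    finally show "v * (v + u) * u = v * (v * (v + u))" .
  qed
qed


lemma ofr_conj': "a \<noteq> 0 \<Longrightarrow> a * (ofr r * inverse a) = ofr r"
  using ofr_conj by (simp add: mult.assoc)
lemma nrm_minus: "nrm (- x) = nrm x" by (simp add: nrm_def toq_uminus)
lemma pure_minus: "pure (- x) = pure x" by (simp add: pure_def toq_uminus)
lemma re_comm: "re w * x = x * re w" by (simp add: re_def ofr_comm)
lemma pure_sub_re: "pure (x - re w) \<longleftrightarrow> Re (fst (toq x)) = Re (fst (toq w))"
  by (simp add: pure_def re_def toq_simps)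
lemma dist_re: "dist (toq (re w)) (toq x) = nrm (x - re w)"
  by (simp add: dist_norm nrm_def toq_diff norm_minus_commute)
lemma rl_re: "\<not> rl w \<Longrightarrow> w - re w \<noteq> 0"
  by (auto simp: rl_iff re_def)

lemma orb_sphere:
  assumes "\<not> rl w"
  shows "toq ` orb w = sphere (toq (re w)) (nrm (w - re w)) \<inter> {y. Re (fst y) = Re (fst (toq w))}"
proof (intro equalityI subsetI)
  fix y assume "y \<in> toq ` orb w"
  then obtain a where a: "a \<noteq> 0" "y = toq (a * w * inverse a)" by (auto simp: orb_def)
  have e: "a * w * inverse a - re w = a * (w - re w) * inverse a"
    using a(1) by (simp add: algebra_simps re_def ofr_conj')
  show "y \<in> sphere (toq (re w)) (nrm (w - re w)) \<inter> {y. Re (fst y) = Re (fst (toq w))}"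
    using a by (simp add: dist_re e nrm_conj Re_conj)
next
  fix y assume y: "y \<in> sphere (toq (re w)) (nrm (w - re w)) \<inter> {y. Re (fst y) = Re (fst (toq w))}"
  define x where "x = ofq y"
  have yx: "y = toq x" by (simp add: x_def)
  have pu: "pure (w - re w)" by (simp add: pure_sub_re)
  have pv: "pure (x - re w)" using y yx by (simp add: pure_sub_re)
  have nv: "nrm (w - re w) = nrm (x - re w)" using y yx by (simp add: dist_re)
  obtain a where a: "a \<noteq> 0" "a * (w - re w) = (x - re w) * a"
    using conj_exists[OF pu pv nv] by blast
  have "a * w = x * a"
    using a(2) by (simp add: algebra_simps re_comm)
  then have "x = a * w * inverse a" using a(1) by (metis mult.assoc right_inverse mult_1_right)
  then show "y \<in> toq ` orb w" using a(1) yx by (auto simp: orb_def)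
qed

lemma orb_mirror:
  assumes "\<not> rl w"
  shows "re w + re w - w \<in> orb w" "re w + re w - w \<noteq> w"
proof -
  have e: "re w + re w - w - re w = - (w - re w)" by (simp add: algebra_simps)
  have "pure (re w + re w - w - re w)" unfolding e pure_minus by (simp add: pure_sub_re)
  then have "toq (re w + re w - w) \<in> toq ` orb w"
    unfolding orb_sphere[OF assms] pure_sub_re
    by (simp add: dist_re e nrm_minus) (metis minus_diff_eq nrm_minus)
  then show "re w + re w - w \<in> orb w" by auto
  show "re w + re w - w \<noteq> w"
  proof
    assume h: "re w + re w - w = w"
    have "ofr (1 + 1) * (w - re w) = w + w - (re w + re w)"
      by (simp only: ofr_add ofr_1 distrib_right mult_1_left) (simp add: algebra_simps)
    also have "\<dots> = 0" using h by (metis diff_eq_eq diff_self)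
    finally have "ofr (1 + 1) * (w - re w) = 0" .
    then show False using rl_re[OF assms] by (simp only: mult_eq_0_iff ofr_eq_0) simp
  qed
qed


definition is_sph :: "'a::euclidean_space set \<Rightarrow> bool" where
  "is_sph X \<longleftrightarrow> (\<exists>c r A. 0 < r \<and> affine A \<and> aff_dim A = int DIM('a) - 1 \<and> c \<in> A \<and> X = sphere c r \<inter> A)"

lemma sph_hyperplane:
  fixes \<nu> c' ya yb :: "'a::euclidean_space"
  assumes nu: "\<nu> \<noteq> 0" and ya: "ya \<in> sphere c' r' \<inter> {y. \<nu> \<bullet> y = \<beta>}"
    and yb: "yb \<in> sphere c' r' \<inter> {y. \<nu> \<bullet> y = \<beta>}" and ne: "ya \<noteq> yb"
  shows "is_sph (sphere c' r' \<inter> {y. \<nu> \<bullet> y = \<beta>})"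
proof -
  define p where "p = c' + ((\<beta> - \<nu> \<bullet> c') / (\<nu> \<bullet> \<nu>)) *\<^sub>R \<nu>"
  have nn: "\<nu> \<bullet> \<nu> \<noteq> 0" using nu by simp
  have pH: "\<nu> \<bullet> p = \<beta>" using nn by (simp add: p_def inner_add_right)
  have pyth: "(dist c' y)\<^sup>2 = (dist p y)\<^sup>2 + (norm (p - c'))\<^sup>2" if "\<nu> \<bullet> y = \<beta>" for y
  proof -
    have pc: "p - c' = ((\<beta> - \<nu> \<bullet> c') / (\<nu> \<bullet> \<nu>)) *\<^sub>R \<nu>" by (simp add: p_def)
    have "(y - p) \<bullet> \<nu> = 0" using that pH by (simp add: inner_diff_right inner_commute[of _ \<nu>])
    then have orth: "(y - p) \<bullet> (p - c') = 0" unfolding pc by simp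
    have "y - c' = (y - p) + (p - c')" by simp
    then have "(norm (y - c'))\<^sup>2 = (norm (y - p))\<^sup>2 + (norm (p - c'))\<^sup>2"
      using orth by (metis norm_add_Pythagorean orthogonal_def)
    then show ?thesis by (simp add: dist_norm norm_minus_commute)
  qed
  have r0: "r' \<ge> 0" using ya by auto
  define \<rho> where "\<rho> = sqrt (r'\<^sup>2 - (norm (p - c'))\<^sup>2)"
  have key: "dist c' y = r' \<longleftrightarrow> dist p y = \<rho>" if "\<nu> \<bullet> y = \<beta>" "dist c' y = r' \<or> dist p y = \<rho>" for y
  proof -
    have "dist c' y = r' \<longleftrightarrow> (dist c' y)\<^sup>2 = r'\<^sup>2" using r0 by (simp add: power2_eq_iff_nonneg)
    also have "\<dots> \<longleftrightarrow> (dist p y)\<^sup>2 = r'\<^sup>2 - (norm (p - c'))\<^sup>2" using pyth[OF that(1)] by auto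
    also have "\<dots> \<longleftrightarrow> dist p y = \<rho>"
    proof
      assume h: "(dist p y)\<^sup>2 = r'\<^sup>2 - (norm (p - c'))\<^sup>2"
      then show "dist p y = \<rho>" unfolding \<rho>_def by (metis zero_le_dist real_sqrt_abs abs_of_nonneg)
    next
      assume h: "dist p y = \<rho>"
      then have "\<rho> \<ge> 0" by auto
      have "r'\<^sup>2 - (norm (p - c'))\<^sup>2 \<ge> 0"
      proof (cases "dist c' y = r'")
        case True then show ?thesis using pyth[OF that(1)] by (simp add: algebra_simps)
      next
        case False
        then have "dist p y = \<rho>" using that(2) by simp
        then show ?thesis using pyth[OF that(1)] r0 ya pyth[of ya] by auto
      qed
      then show "(dist p y)\<^sup>2 = r'\<^sup>2 - (norm (p - c'))\<^sup>2" using h unfolding \<rho>_def by simp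
    qed
    finally show ?thesis .
  qed
  have eq: "sphere c' r' \<inter> {y. \<nu> \<bullet> y = \<beta>} = sphere p \<rho> \<inter> {y. \<nu> \<bullet> y = \<beta>}"
  proof (intro set_eqI iffI)
    fix y assume "y \<in> sphere c' r' \<inter> {y. \<nu> \<bullet> y = \<beta>}"
    then show "y \<in> sphere p \<rho> \<inter> {y. \<nu> \<bullet> y = \<beta>}" using key[of y] by simp
  next
    fix y assume "y \<in> sphere p \<rho> \<inter> {y. \<nu> \<bullet> y = \<beta>}"
    then show "y \<in> sphere c' r' \<inter> {y. \<nu> \<bullet> y = \<beta>}" using key[of y] by simp
  qed
  have "\<rho> > 0"
  proof (rule ccontr)
    assume "\<not> \<rho> > 0"
    moreover have "ya \<in> sphere p \<rho>" "yb \<in> sphere p \<rho>" using eq ya yb by auto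
    ultimately show False using ne by auto
  qed
  then show ?thesis unfolding is_sph_def
    by (intro exI[of _ p] exI[of _ \<rho>] exI[of _ "{y. \<nu> \<bullet> y = \<beta>}"])
       (simp add: eq pH affine_hyperplane nu)
qed


locale simil =
  fixes L :: "'a::euclidean_space \<Rightarrow> 'a" and s :: real
  assumes lin: "linear L" and inj: "inj L" and nrmL: "\<And>x. norm (L x) = s * norm x" and spos: "s > 0"
begin

lemma surj: "surj L" using lin inj linear_injective_imp_surjective by blast

lemma img_eq: "(\<lambda>x. L x + e) ` P = (+) e ` (L ` P)" by (auto simp: image_image add.commute)

lemma affine_img: "affine P \<Longrightarrow> affine ((\<lambda>x. L x + e) ` P)"
proof -
  assume "affine P"
  have "L ` P = L ` (affine hull P)" using \<open>affine P\<close> by (metis affine_hull_eq)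
  also have "\<dots> = affine hull (L ` P)"
    using lin by (simp add: affine_hull_linear_image linear_conv_bounded_linear)
  finally have "affine (L ` P)" by (metis affine_affine_hull)
  then show ?thesis unfolding img_eq using affine_translation by blast
qed

lemma aff_dim_img: "aff_dim ((\<lambda>x. L x + e) ` P) = aff_dim P"
  unfolding img_eq aff_dim_translation_eq using lin inj by simp

lemma inj_img: "inj (\<lambda>x. L x + e)"
  using inj by (auto simp: inj_def)

lemma sphere_img: "(\<lambda>x. L x + e) ` sphere c r = sphere (L c + e) (s * r)"
proof (intro equalityI subsetI)
  fix y assume "y \<in> (\<lambda>x. L x + e) ` sphere c r"
  then obtain x where x: "dist c x = r" "y = L x + e" by auto
  have "dist (L c + e) y = norm (L (c - x))" unfolding x(2) using lin by (simp add: dist_norm linear_diff)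
  then show "y \<in> sphere (L c + e) (s * r)" using x by (simp add: nrmL dist_norm)
next
  fix y assume y: "y \<in> sphere (L c + e) (s * r)"
  obtain x where x: "L x = y - e" using surj by (metis surjD)
  have y': "y = L x + e" using x by simp
  have "dist (L c + e) y = norm (L c - L x)" unfolding y' by (simp add: dist_norm)
  also have "\<dots> = norm (L (c - x))" using lin by (simp add: linear_diff)
  finally have "dist (L c + e) y = norm (L (c - x))" .
  then have "s * dist c x = s * r" using y by (simp add: nrmL dist_norm)
  then have "dist c x = r" using spos by simp
  then show "y \<in> (\<lambda>x. L x + e) ` sphere c r" using x by (auto intro!: image_eqI[of _ _ x])
qed

lemma sph_img: "is_sph X \<Longrightarrow> is_sph ((\<lambda>x. L x + e) ` X)"
proof -
  assume "is_sph X"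
  then obtain c r A where h: "0 < r" "affine A" "aff_dim A = int DIM('a) - 1" "c \<in> A" "X = sphere c r \<inter> A"
    unfolding is_sph_def by blast
  have "(\<lambda>x. L x + e) ` X = sphere (L c + e) (s * r) \<inter> (\<lambda>x. L x + e) ` A"
    unfolding h(5) image_Int[OF inj_img] sphere_img ..
  then show ?thesis unfolding is_sph_def using h spos
    by (intro exI[of _ "L c + e"] exI[of _ "s * r"] exI[of _ "(\<lambda>x. L x + e) ` A"])
       (simp add: affine_img aff_dim_img)
qed

end


definition sig :: "'a::real_inner \<Rightarrow> 'a" where "sig x = inverse ((norm x)\<^sup>2) *\<^sub>R x"

lemma sig_0 [simp]: "sig 0 = 0" by (simp add: sig_def)
lemma sig_eq_0 [simp]: "sig x = 0 \<longleftrightarrow> x = 0" by (simp add: sig_def)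
lemma norm_sig: "norm (sig x) = inverse (norm x)"
  by (cases "x = 0") (simp_all add: sig_def power2_eq_square)
lemma sig_sig [simp]: "sig (sig x) = x"
proof (cases "x = 0")
  case False
  then show ?thesis by (simp add: sig_def norm_sig power2_eq_square field_simps)
qed simp

lemma sig_img_minus0: "y \<in> sig ` (T - {0}) \<longleftrightarrow> y \<noteq> 0 \<and> sig y \<in> T"
  by (auto intro: image_eqI[of y sig "sig y"])

lemma dist_sq_iff: "dist a y = t \<longleftrightarrow> t \<ge> 0 \<and> y \<bullet> y - 2 * (a \<bullet> y) + a \<bullet> a = t\<^sup>2"
  for a y :: "'a::real_inner"
proof -
  have "(dist a y)\<^sup>2 = y \<bullet> y - 2 * (a \<bullet> y) + a \<bullet> a"
    by (simp add: dist_norm power2_norm_eq_inner inner_diff_left inner_diff_right inner_commute)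
  then show ?thesis by (metis zero_le_dist power2_eq_iff_nonneg)
qed

lemma sig_mem:
  fixes c n y :: "'a::real_inner"
  assumes r: "r > 0" and y: "y \<noteq> 0"
  shows "sig y \<in> sphere c r \<inter> {x. n \<bullet> x = n \<bullet> c} \<longleftrightarrow>
    1 - 2 * (c \<bullet> y) + (c \<bullet> c - r\<^sup>2) * (y \<bullet> y) = 0 \<and> n \<bullet> y = (n \<bullet> c) * (y \<bullet> y)"
proof -
  define N where "N = y \<bullet> y"
  have N: "N > 0" using y by (simp add: N_def)
  have sy: "sig y = inverse N *\<^sub>R y" by (simp add: sig_def N_def power2_norm_eq_inner)
  have "sig y \<in> sphere c r \<longleftrightarrow> inverse N * inverse N * N - 2 * (inverse N * (c \<bullet> y)) + c \<bullet> c = r\<^sup>2"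
    using r by (simp add: dist_sq_iff[of c] sy N_def inner_commute mult.assoc)
  also have "\<dots> \<longleftrightarrow> 1 - 2 * (c \<bullet> y) + (c \<bullet> c - r\<^sup>2) * N = 0"
    using N by (simp add: field_simps)
  finally have 1: "sig y \<in> sphere c r \<longleftrightarrow> 1 - 2 * (c \<bullet> y) + (c \<bullet> c - r\<^sup>2) * N = 0" .
  have 2: "n \<bullet> sig y = n \<bullet> c \<longleftrightarrow> n \<bullet> y = (n \<bullet> c) * N"
    using N by (simp add: sy field_simps)
  show ?thesis using 1 2 by (simp add: N_def)
qed


lemma dim_two_orth:
  fixes c n :: "'a::euclidean_space"
  assumes c: "c \<noteq> 0" and n: "n \<noteq> 0" and cn: "c \<bullet> n = 0"
  shows "dim {y. c \<bullet> y = 0 \<and> n \<bullet> y = 0} + 2 = DIM('a)"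
proof -
  have V: "{y \<in> UNIV. \<forall>x \<in> span {c, n}. orthogonal x y} = {y. c \<bullet> y = 0 \<and> n \<bullet> y = 0}"
  proof (intro set_eqI iffI)
    fix y assume "y \<in> {y \<in> UNIV. \<forall>x \<in> span {c, n}. orthogonal x y}"
    then show "y \<in> {y. c \<bullet> y = 0 \<and> n \<bullet> y = 0}" by (simp add: span_base orthogonal_def)
  next
    fix y assume y: "y \<in> {y. c \<bullet> y = 0 \<and> n \<bullet> y = 0}"
    have "orthogonal y x" if "x \<in> span {c, n}" for x
      by (rule orthogonal_to_span[OF that]) (use y in \<open>auto simp: orthogonal_def inner_commute\<close>)
    then show "y \<in> {y \<in> UNIV. \<forall>x \<in> span {c, n}. orthogonal x y}" by (simp add: orthogonal_commute)
  qed
  have cnd: "c \<noteq> n" using c cn by auto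
  have ind: "independent {c, n}"
    by (rule pairwise_orthogonal_independent)
       (use c n cn cnd in \<open>auto simp: pairwise_def orthogonal_def inner_commute\<close>)
  have d2: "dim (span {c, n}) = 2" using dim_span_eq_card_independent[OF ind] cnd by simp
  have "dim {y \<in> UNIV. \<forall>x \<in> span {c, n}. orthogonal x y} + dim (span {c, n}) = dim (UNIV :: 'a set)"
    by (rule dim_subspace_orthogonal_to_vectors) auto
  then show ?thesis using V d2 by simp
qed

lemma inv_plane:
  fixes c n :: "'a::euclidean_space"
  assumes r: "r > 0" and n: "n \<noteq> 0" and z: "0 \<in> sphere c r \<inter> {x. n \<bullet> x = n \<bullet> c}"
  shows "affine (sig ` (sphere c r \<inter> {x. n \<bullet> x = n \<bullet> c} - {0})) \<and>
         aff_dim (sig ` (sphere c r \<inter> {x. n \<bullet> x = n \<bullet> c} - {0})) = int DIM('a) - 2"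
proof -
  have cc: "c \<bullet> c = r\<^sup>2" using z dist_sq_iff[of c 0 r] by simp
  have m: "n \<bullet> c = 0" using z by simp
  have c0: "c \<noteq> 0" using cc r by auto
  let ?U = "sig ` (sphere c r \<inter> {x. n \<bullet> x = n \<bullet> c} - {0})"
  have U: "?U = {y. (2 *\<^sub>R c) \<bullet> y = 1} \<inter> {y. n \<bullet> y = 0}"
  proof (intro set_eqI)
    fix y
    show "y \<in> ?U \<longleftrightarrow> y \<in> {y. (2 *\<^sub>R c) \<bullet> y = 1} \<inter> {y. n \<bullet> y = 0}"
    proof (cases "y = 0")
      case False
      show ?thesis unfolding sig_img_minus0 using sig_mem[OF r False, of c n] False
        by (simp add: cc m)
    qed (simp add: sig_img_minus0)
  qed
  define y0 where "y0 = inverse (2 * (c \<bullet> c)) *\<^sub>R c"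
  define V where "V = {y. c \<bullet> y = 0 \<and> n \<bullet> y = 0}"
  have cc0: "c \<bullet> c \<noteq> 0" using c0 by simp
  have UV: "?U = (+) y0 ` V"
  proof (intro set_eqI iffI)
    fix y assume "y \<in> ?U"
    then have "y - y0 \<in> V" "y = y0 + (y - y0)"
      using cc0 m unfolding U V_def y0_def by (auto simp: inner_diff_right inner_commute)
    then show "y \<in> (+) y0 ` V" by blast
  next
    fix y assume "y \<in> (+) y0 ` V"
    then obtain v where "v \<in> V" "y = y0 + v" by auto
    then show "y \<in> ?U"
      using cc0 m unfolding U V_def y0_def by (auto simp: inner_add_right inner_commute)
  qed
  have sV: "subspace V" unfolding V_def subspace_def by (auto simp: inner_add_right)
  have "aff_dim ?U = int (dim V)" unfolding UV aff_dim_translation_eq by (rule aff_dim_subspace[OF sV])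
  moreover have "dim V + 2 = DIM('a)"
    unfolding V_def by (rule dim_two_orth[OF c0 n]) (use m in \<open>simp add: inner_commute\<close>)
  ultimately have "aff_dim ?U = int DIM('a) - 2" by linarith
  moreover have "affine ?U" unfolding U by (intro affine_Int affine_hyperplane)
  ultimately show ?thesis by blast
qed


lemma inv_sph:
  fixes c n :: "'a::euclidean_space"
  assumes r: "r > 0" and n: "n \<noteq> 0" and z: "0 \<notin> sphere c r \<inter> {x. n \<bullet> x = n \<bullet> c}"
    and pa: "pa \<in> sphere c r \<inter> {x. n \<bullet> x = n \<bullet> c}" and pb: "pb \<in> sphere c r \<inter> {x. n \<bullet> x = n \<bullet> c}"
    and ne: "pa \<noteq> pb"
  shows "is_sph (sig ` (sphere c r \<inter> {x. n \<bullet> x = n \<bullet> c}))"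
proof -
  define T where "T = sphere c r \<inter> {x. n \<bullet> x = n \<bullet> c}"
  define k where "k = c \<bullet> c - r\<^sup>2"
  define m where "m = n \<bullet> c"
  have T0: "T - {0} = T" using z T_def by auto
  have memU: "y \<in> sig ` T \<longleftrightarrow> 1 - 2 * (c \<bullet> y) + k * (y \<bullet> y) = 0 \<and> n \<bullet> y = m * (y \<bullet> y)" for y
  proof (cases "y = 0")
    case True then show ?thesis using z T_def by (auto simp: image_iff)
  next
    case False
    show ?thesis using sig_img_minus0[of y T] T0 sig_mem[OF r False, of c n] False
      by (simp add: T_def k_def m_def)
  qed
  have z0: "sig pa \<in> sig ` T" "sig pb \<in> sig ` T" using pa pb T_def by auto
  have zne: "sig pa \<noteq> sig pb" using ne by (metis sig_sig)
  show ?thesis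
  proof (cases "k = 0")
    case False
    define \<nu> where "\<nu> = k *\<^sub>R n - (2 * m) *\<^sub>R c"
    have E: "1 - 2 * (c \<bullet> y) + k * (y \<bullet> y) = 0 \<longleftrightarrow> y \<in> sphere (inverse k *\<^sub>R c) (r / \<bar>k\<bar>)" for y
    proof -
      have "y \<in> sphere (inverse k *\<^sub>R c) (r / \<bar>k\<bar>) \<longleftrightarrow>
            y \<bullet> y - 2 * (inverse k * (c \<bullet> y)) + inverse k * inverse k * (c \<bullet> c) = (r / \<bar>k\<bar>)\<^sup>2"
        using r by (simp add: dist_sq_iff inner_commute mult.assoc)
      also have "\<dots> \<longleftrightarrow> (k * k * (y \<bullet> y) - 2 * k * (c \<bullet> y) + c \<bullet> c) / (k * k) = r\<^sup>2 / (k * k)"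
      proof -
        have "y \<bullet> y - 2 * (inverse k * (c \<bullet> y)) + inverse k * inverse k * (c \<bullet> c)
              = (k * k * (y \<bullet> y) - 2 * k * (c \<bullet> y) + c \<bullet> c) / (k * k)"
          using False by (simp add: divide_simps) (simp add: algebra_simps)
        moreover have "(r / \<bar>k\<bar>)\<^sup>2 = r\<^sup>2 / (k * k)" by (simp add: power_divide power2_eq_square)
        ultimately show ?thesis by simp
      qed
      also have "\<dots> \<longleftrightarrow> k * k * (y \<bullet> y) - 2 * k * (c \<bullet> y) + c \<bullet> c = r\<^sup>2"
        using False by simp
      also have "\<dots> \<longleftrightarrow> k * (1 - 2 * (c \<bullet> y) + k * (y \<bullet> y)) = 0"
        by (simp add: k_def algebra_simps)
      finally show ?thesis using False by simp
    qed
    have F: "1 - 2 * (c \<bullet> y) + k * (y \<bullet> y) = 0 \<Longrightarrow> n \<bullet> y = m * (y \<bullet> y) \<longleftrightarrow> \<nu> \<bullet> y = - m" for y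
    proof -
      assume e: "1 - 2 * (c \<bullet> y) + k * (y \<bullet> y) = 0"
      have "\<nu> \<bullet> y = k * (n \<bullet> y) - m * (2 * (c \<bullet> y))" by (simp add: \<nu>_def inner_diff_left)
      also have "\<dots> = k * (n \<bullet> y - m * (y \<bullet> y)) - m"
      proof -
        have h2: "2 * (c \<bullet> y) = 1 + k * (y \<bullet> y)" using e by linarith
        show ?thesis by (simp only: h2) (simp add: algebra_simps)
      qed
      finally have "\<nu> \<bullet> y = k * (n \<bullet> y - m * (y \<bullet> y)) - m" .
      then show ?thesis using False by simp
    qed
    have U: "sig ` T = sphere (inverse k *\<^sub>R c) (r / \<bar>k\<bar>) \<inter> {y. \<nu> \<bullet> y = - m}"
    proof (intro set_eqI)
      fix y show "y \<in> sig ` T \<longleftrightarrow> y \<in> sphere (inverse k *\<^sub>R c) (r / \<bar>k\<bar>) \<inter> {y. \<nu> \<bullet> y = - m}"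
        using memU[of y] E[of y] F[of y] by auto
    qed
    have "\<nu> \<noteq> 0"
    proof
      assume "\<nu> = 0"
      then have "m = 0" using z0(1) U by (auto split: if_splits)
      then show False using \<open>\<nu> = 0\<close> False n by (simp add: \<nu>_def)
    qed
    then have "is_sph (sphere (inverse k *\<^sub>R c) (r / \<bar>k\<bar>) \<inter> {y. \<nu> \<bullet> y = - m})"
      by (rule sph_hyperplane[where ya="sig pa" and yb="sig pb"]) (use z0 U zne in auto)
    then show ?thesis using U T_def by simp
  next
    case True
    have m0: "m \<noteq> 0"
    proof
      assume "m = 0"
      have "c \<bullet> c = r\<^sup>2" using True by (simp add: k_def)
      then have "norm c = r" using r by (simp add: power2_norm_eq_inner[symmetric] power2_eq_iff_nonneg)
      then have "0 \<in> T" using \<open>m = 0\<close> unfolding T_def m_def by simp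
      then show False using z T_def by simp
    qed
    have c0: "c \<noteq> 0" using True r by (auto simp: k_def)
    have E: "1 - 2 * (c \<bullet> y) + k * (y \<bullet> y) = 0 \<longleftrightarrow> (2 *\<^sub>R c) \<bullet> y = 1" for y
      using True by auto
    have F: "n \<bullet> y = m * (y \<bullet> y) \<longleftrightarrow> y \<in> sphere (inverse (2 * m) *\<^sub>R n) (norm n / (2 * \<bar>m\<bar>))" for y
    proof -
      have "y \<in> sphere (inverse (2 * m) *\<^sub>R n) (norm n / (2 * \<bar>m\<bar>)) \<longleftrightarrow>
            y \<bullet> y - 2 * (inverse (2 * m) * (n \<bullet> y)) + inverse (2 * m) * inverse (2 * m) * (n \<bullet> n)
              = (norm n / (2 * \<bar>m\<bar>))\<^sup>2"
        by (simp add: dist_sq_iff inner_commute mult.assoc)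
      also have "\<dots> \<longleftrightarrow> y \<bullet> y - inverse m * (n \<bullet> y) = 0"
      proof -
        have a: "2 * (inverse (2 * m) * (n \<bullet> y)) = inverse m * (n \<bullet> y)" using m0 by simp
        have b: "inverse (2 * m) * inverse (2 * m) * (n \<bullet> n) = (norm n / (2 * \<bar>m\<bar>))\<^sup>2"
          using m0 by (simp add: power_divide power2_eq_square power2_norm_eq_inner[symmetric] abs_mult_self_eq)
            (simp add: power2_norm_eq_inner power2_eq_square divide_inverse)
        show ?thesis by (simp only: a b) linarith
      qed
      also have "\<dots> \<longleftrightarrow> y \<bullet> y = (n \<bullet> y) / m" by (simp add: divide_inverse mult.commute)
      also have "\<dots> \<longleftrightarrow> n \<bullet> y = m * (y \<bullet> y)"
        using m0 by (auto simp: eq_divide_eq mult.commute)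
      finally show ?thesis by simp
    qed
    have U: "sig ` T = sphere (inverse (2 * m) *\<^sub>R n) (norm n / (2 * \<bar>m\<bar>)) \<inter> {y. (2 *\<^sub>R c) \<bullet> y = 1}"
    proof (intro set_eqI)
      fix y show "y \<in> sig ` T \<longleftrightarrow> y \<in> sphere (inverse (2 * m) *\<^sub>R n) (norm n / (2 * \<bar>m\<bar>)) \<inter> {y. (2 *\<^sub>R c) \<bullet> y = 1}"
        using memU[of y] E[of y] F[of y] by auto
    qed
    have "2 *\<^sub>R c \<noteq> 0" using c0 by simp
    then have "is_sph (sphere (inverse (2 * m) *\<^sub>R n) (norm n / (2 * \<bar>m\<bar>)) \<inter> {y. (2 *\<^sub>R c) \<bullet> y = 1})"
      by (rule sph_hyperplane[where ya="sig pa" and yb="sig pb"]) (use z0 U zne in auto)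
    then show ?thesis using U T_def by simp
  qed
qed


lemma DIM_quat [simp]: "DIM(complex \<times> complex) = 4" by simp

definition sp :: "hq set \<Rightarrow> bool" where "sp S \<longleftrightarrow> is_2sphere S \<or> is_2plane S"

lemma is_2sphere_iff: "is_2sphere S \<longleftrightarrow> (\<exists>X. is_sph X \<and> S = Fin ` X)"
proof
  assume "is_2sphere S"
  then obtain c r A where h: "0 < r" "affine A" "aff_dim A = 3" "c \<in> A" "S = Fin ` (sphere c r \<inter> A)"
    unfolding is_2sphere_def by blast
  then have "is_sph (sphere c r \<inter> A)" unfolding is_sph_def
    by (intro exI[of _ c] exI[of _ r] exI[of _ A]) simp
  then show "\<exists>X. is_sph X \<and> S = Fin ` X" using h(5) by blast
next
  assume "\<exists>X. is_sph X \<and> S = Fin ` X"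
  then obtain c r A where h: "0 < r" "affine A" "aff_dim A = 3" "c \<in> A" "S = Fin ` (sphere c r \<inter> A)"
    unfolding is_sph_def by auto
  then show "is_2sphere S" unfolding is_2sphere_def by blast
qed

lemma toq_scale: "toq (ofr r * x) = r *\<^sub>R toq x"
  by (cases "toq x") (simp add: toq_simps qmul_def scaleR_prod_def scaleR_conv_of_real)
lemma ofq_scale: "ofq (r *\<^sub>R y) = ofr r * ofq y"
  by (metis toq_scale toq_ofq' ofq_toq')
lemma ofq_add: "ofq (y + z) = ofq y + ofq z" by (metis toq_add toq_ofq' ofq_toq')

definition rmL :: "H \<Rightarrow> quat \<Rightarrow> quat" where "rmL b y = toq (ofq y * b)"

lemma simil_rm: "b \<noteq> 0 \<Longrightarrow> simil (rmL b) (nrm b)"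
proof (rule simil.intro)
  show "linear (rmL b)"
    by (rule linearI) (simp_all add: rmL_def ofq_add distrib_right toq_add ofq_scale mult.assoc toq_scale)
  assume b: "b \<noteq> 0"
  show "inj (rmL b)"
  proof (rule injI)
    fix x y assume "rmL b x = rmL b y"
    then have "ofq x * b = ofq y * b" by (simp add: rmL_def)
    then have "ofq x = ofq y" using b by simp
    then show "x = y" by (metis toq_ofq')
  qed
  show "norm (rmL b x) = nrm b * norm x" for x
  proof -
    have "norm (rmL b x) = nrm (ofq x * b)" by (simp add: rmL_def nrm_def)
    also have "\<dots> = norm x * nrm b" by (simp only: nrm_mult) (simp add: nrm_def)
    finally show ?thesis by simp
  qed
  show "nrm b > 0" using b by (simp add: nrm_def)
qed

definition kap :: "quat \<Rightarrow> quat" where "kap y = (cnj (fst y), - snd y)"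

lemma simil_kap: "simil kap 1"
proof (rule simil.intro)
  show "linear kap"
    by (rule linearI) (simp_all add: kap_def scaleR_prod_def scaleR_conv_of_real)
  show "inj kap" unfolding inj_def kap_def by (auto simp: prod_eq_iff)
  show "norm (kap x) = 1 * norm x" for x by (simp add: kap_def norm_prod_def)
qed simp

lemma simil_id: "simil (\<lambda>x::'a::euclidean_space. x) 1"
  by unfold_locales (auto simp: inj_def)

lemma qinv_kap_sig: "qinv y = kap (sig y)"
proof -
  obtain a b where y: "y = (a, b)" by (cases y) auto
  have n: "(norm y)\<^sup>2 = (cmod a)\<^sup>2 + (cmod b)\<^sup>2" by (simp add: y norm_prod_def)
  show ?thesis unfolding qinv_def kap_def sig_def n
    by (simp add: y Let_def scaleR_conv_of_real divide_inverse mult.commute)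
qed


definition Tm :: "H \<Rightarrow> Hm" where "Tm f = (1, f, 0, 1)"
definition Rm :: "H \<Rightarrow> Hm" where "Rm b = (1, 0, 0, inverse b)"
definition Jm :: Hm where "Jm = (0, 1, 1, 0)"
definition Km :: "H \<Rightarrow> Hm" where "Km a = (a, 0, 0, a)"

lemma inv_Tm: "inv_m (Tm f)"
  unfolding inv_m_def by (rule exI[of _ "Tm (- f)"]) (simp add: Tm_def hid_def)
lemma inv_Rm: "b \<noteq> 0 \<Longrightarrow> inv_m (Rm b)"
  unfolding inv_m_def by (rule exI[of _ "Rm (inverse b)"]) (simp add: Rm_def hid_def)
lemma inv_Jm: "inv_m Jm"
  unfolding inv_m_def by (rule exI[of _ Jm]) (simp add: Jm_def hid_def)
lemma inv_Km: "a \<noteq> 0 \<Longrightarrow> inv_m (Km a)"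
  unfolding inv_m_def by (rule exI[of _ "Km (inverse a)"]) (simp add: Km_def hid_def)

lemma mob_Tm: "mobius (tq (Tm f)) (pt x) = pt (x + f)" "mobius (tq (Tm f)) Inf = Inf"
  by (simp_all add: Tm_def mob_pt mob_Inf del: mobius.simps)
lemma mob_Rm: "b \<noteq> 0 \<Longrightarrow> mobius (tq (Rm b)) (pt x) = pt (x * b)" "mobius (tq (Rm b)) Inf = Inf"
  by (simp_all add: Rm_def mob_pt mob_Inf del: mobius.simps)
lemma mob_Jm: "mobius (tq Jm) (pt x) = (if x = 0 then Inf else pt (inverse x))" "mobius (tq Jm) Inf = pt 0"
  by (simp_all add: Jm_def mob_pt mob_Inf del: mobius.simps)
lemma mob_Km: "a \<noteq> 0 \<Longrightarrow> mobius (tq (Km a)) (pt x) = pt (a * x * inverse a)" "mobius (tq (Km a)) Inf = Inf"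
  by (simp_all add: Km_def mob_pt mob_Inf del: mobius.simps)

lemma ofq_eq_0_iff [simp]: "ofq y = 0 \<longleftrightarrow> y = 0" using toq_zero_iff[of "ofq y"] by simp
lemma Fin_pt: "Fin y = pt (ofq y)" by (simp add: pt_def)

lemma sph_aff:
  assumes "is_sph X" "b \<noteq> 0"
  shows "is_sph ((\<lambda>y. rmL b y + e) ` X)"
  using simil.sph_img[OF simil_rm[OF assms(2)] assms(1)] .

lemma sp_Tm:
  assumes "sp S"
  shows "sp (mobius (tq (Tm f)) ` S)"
proof -
  have mF: "mobius (tq (Tm f)) (Fin y) = Fin (y + toq f)" for y
    unfolding Fin_pt mob_Tm by (simp add: pt_def toq_add)
  have img: "mobius (tq (Tm f)) ` Fin ` X = Fin ` ((\<lambda>y. y + toq f) ` X)" for X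
    by (simp add: image_image mF)
  have sI: "simil (\<lambda>x::quat. x) 1" by (rule simil_id)
  from assms show ?thesis unfolding sp_def
  proof
    assume "is_2sphere S"
    then obtain X where X: "is_sph X" "S = Fin ` X" by (auto simp: is_2sphere_iff)
    have "is_sph ((\<lambda>y. y + toq f) ` X)" using simil.sph_img[OF sI X(1)] by simp
    then show "is_2sphere (mobius (tq (Tm f)) ` S) \<or> is_2plane (mobius (tq (Tm f)) ` S)"
      unfolding is_2sphere_iff X(2) img by blast
  next
    assume "is_2plane S"
    then obtain P where P: "affine P" "aff_dim P = 2" "S = insert Inf (Fin ` P)" unfolding is_2plane_def by blast
    have "affine ((\<lambda>y. y + toq f) ` P)" using simil.affine_img[OF sI P(1)] by simp
    moreover have "aff_dim ((\<lambda>y. y + toq f) ` P) = 2" using simil.aff_dim_img[OF sI, of "toq f" P] P(2) by simp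
    moreover have "mobius (tq (Tm f)) ` S = insert Inf (Fin ` ((\<lambda>y. y + toq f) ` P))"
      unfolding P(3) by (simp add: img mob_Tm)
    ultimately show "is_2sphere (mobius (tq (Tm f)) ` S) \<or> is_2plane (mobius (tq (Tm f)) ` S)"
      unfolding is_2plane_def by blast
  qed
qed

lemma sph_hyp_form:
  assumes "is_sph (X :: quat set)"
  obtains c r n where "r > 0" "n \<noteq> 0" "X = sphere c r \<inter> {x. n \<bullet> x = n \<bullet> c}"
proof -
  obtain c r A where h: "0 < r" "affine A" "aff_dim A = int DIM(quat) - 1" "c \<in> A" "X = sphere c r \<inter> A"
    using assms unfolding is_sph_def by blast
  obtain n \<beta> where n: "n \<noteq> 0" "affine hull A = {x. n \<bullet> x = \<beta>}"
    using h(3) aff_dim_eq_hyperplane[of A] by auto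
  have A: "A = {x. n \<bullet> x = \<beta>}" using n(2) h(2) by (metis affine_hull_eq)
  have "\<beta> = n \<bullet> c" using h(4) A by simp
  then show ?thesis using that[of r n c] h A n by simp
qed

lemma sp_Jm:
  assumes X: "is_sph X" and a: "a \<in> X" "a' \<in> X" "a \<noteq> a'"
  shows "sp (mobius (tq Jm) ` Fin ` X)"
proof -
  obtain c r n where h: "r > 0" "n \<noteq> 0" "X = sphere c r \<inter> {x. n \<bullet> x = n \<bullet> c}"
    using sph_hyp_form[OF X] by blast
  have mF: "mobius (tq Jm) (Fin y) = (if y = 0 then Inf else Fin (kap (sig y)))" for y
    unfolding Fin_pt mob_Jm by (simp add: pt_def qinv_H[symmetric] qinv_kap_sig)
  have img: "mobius (tq Jm) ` Fin ` X = (if 0 \<in> X then {Inf} else {}) \<union> Fin ` ((\<lambda>x. kap x + 0) ` sig ` (X - {0}))"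
    by (auto simp: image_image mF split: if_splits)
  have sK: "simil kap 1" by (rule simil_kap)
  show ?thesis
  proof (cases "0 \<in> X")
    case True
    have P: "affine (sig ` (X - {0}))" "aff_dim (sig ` (X - {0})) = 2"
      using inv_plane[OF h(1,2)] True h(3) by auto
    have "affine ((\<lambda>x. kap x + 0) ` sig ` (X - {0}))" using simil.affine_img[OF sK P(1)] .
    moreover have "aff_dim ((\<lambda>x. kap x + 0) ` sig ` (X - {0})) = 2" using simil.aff_dim_img[OF sK, of 0 "sig ` (X - {0})"] P(2) by (simp only:)
    ultimately show ?thesis unfolding sp_def is_2plane_def img using True by auto
  next
    case False
    have "is_sph (sig ` X)" using inv_sph[OF h(1,2), where pa=a and pb=a'] False a h(3) by simp
    then have "is_sph ((\<lambda>x. kap x + 0) ` sig ` X)" by (rule simil.sph_img[OF sK])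
    then show ?thesis unfolding sp_def is_2sphere_iff img using False by auto
  qed
qed


lemma mult_inv_cancel_left: "(a::H) \<noteq> 0 \<Longrightarrow> a * (inverse a * b) = b"
  by (simp flip: mult.assoc)
lemma inv_mult_cancel_left: "(a::H) \<noteq> 0 \<Longrightarrow> inverse a * (a * b) = b"
  by (simp flip: mult.assoc)
lemma invdiff: "(x::H) \<noteq> 0 \<Longrightarrow> y \<noteq> 0 \<Longrightarrow> inverse x - inverse y = inverse y * (y - x) * inverse x"
  by (simp add: algebra_simps mult_inv_cancel_left mult.assoc)

lemma cr_ffff: "crossratio (pt a) (pt b) (pt c) (pt d) = toq (inverse (b - a) * (d - a) * inverse (d - c) * (b - c))"
  by (simp add: pt_def qmul_H qinv_H qminus_H)
lemma cr_Ifff: "crossratio Inf (pt b) (pt c) (pt d) = toq (inverse (d - c) * (b - c))"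
  by (simp add: pt_def qmul_H qinv_H qminus_H)
lemma cr_ffIf: "crossratio (pt a) (pt b) Inf (pt d) = toq (inverse (b - a) * (d - a))"
  by (simp add: pt_def qmul_H qinv_H qminus_H)
lemma cr_fffI: "crossratio (pt a) (pt b) (pt c) Inf = toq (inverse (b - a) * (b - c))"
  by (simp add: pt_def qmul_H qinv_H qminus_H)
lemma cr_fIff: "crossratio (pt a) Inf (pt c) (pt d) = toq ((d - a) * inverse (d - c))"
  by (simp add: pt_def qmul_H qinv_H qminus_H)

definition qq :: "H \<Rightarrow> H \<Rightarrow> hq" where "qq f z = (if z = 0 then Inf else pt (inverse z + f))"

lemma cr_qq:
  assumes d: "z1 \<noteq> z3" "z1 \<noteq> z4" "z3 \<noteq> z4"
  shows "crossratio (qq f z1) (pt f) (qq f z3) (qq f z4) = toq ((z1 - z4) * inverse (z3 - z4))"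
proof -
  have d34: "z3 - z4 \<noteq> 0" using d by simp
  have d14: "z1 - z4 \<noteq> 0" using d by simp
  consider "z1 \<noteq> 0" "z3 \<noteq> 0" "z4 \<noteq> 0" | "z1 = 0" | "z3 = 0" | "z4 = 0" by blast
  then show ?thesis
  proof cases
    case 1
    have "inverse (f - (inverse z1 + f)) * (inverse z4 + f - (inverse z1 + f)) *
          inverse (inverse z4 + f - (inverse z3 + f)) * (f - (inverse z3 + f))
        = (- z1) * (inverse z1 * (z1 - z4) * inverse z4) * (z4 * inverse (z3 - z4) * z3) * (- inverse z3)"
      using 1 d34 by (simp add: invdiff nonzero_inverse_mult_distrib mult.assoc)
    also have "\<dots> = (z1 - z4) * inverse (z3 - z4)"
      using 1 by (simp add: mult.assoc mult_inv_cancel_left inv_mult_cancel_left)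
    finally show ?thesis using 1 by (simp add: qq_def cr_ffff)
  next
    case 2
    then have n: "z3 \<noteq> 0" "z4 \<noteq> 0" using d by auto
    have "inverse (inverse z4 + f - (inverse z3 + f)) * (f - (inverse z3 + f))
        = (z4 * inverse (z3 - z4) * z3) * (- inverse z3)"
      using n d34 by (simp add: invdiff nonzero_inverse_mult_distrib mult.assoc)
    also have "\<dots> = (z1 - z4) * inverse (z3 - z4)"
      using n 2 by (simp add: mult.assoc mult_inv_cancel_left inv_mult_cancel_left)
    finally show ?thesis using 2 n by (simp add: qq_def cr_Ifff)
  next
    case 3
    then have n: "z1 \<noteq> 0" "z4 \<noteq> 0" using d by auto
    have "inverse (f - (inverse z1 + f)) * (inverse z4 + f - (inverse z1 + f))
        = (- z1) * (inverse z1 * (z1 - z4) * inverse z4)"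
      using n by (simp add: invdiff mult.assoc)
    also have "\<dots> = (z1 - z4) * inverse (z3 - z4)"
      using n 3 by (simp add: mult.assoc mult_inv_cancel_left inv_mult_cancel_left)
    finally show ?thesis using 3 n by (simp add: qq_def cr_ffIf)
  next
    case 4
    then have n: "z1 \<noteq> 0" "z3 \<noteq> 0" using d by auto
    have "inverse (f - (inverse z1 + f)) * (f - (inverse z3 + f)) = (z1 - z4) * inverse (z3 - z4)"
      using n 4 by simp
    then show ?thesis using 4 n by (simp add: qq_def cr_fffI)
  qed
qed


lemma hq_fin: "x \<noteq> Inf \<Longrightarrow> \<exists>a. x = pt a"
  by (cases x) (auto simp: pt_def intro: exI[of _ "ofq _"])

lemma mob_comp: "inv_m N \<Longrightarrow> mobius (tq (hmul M N)) x = mobius (tq M) (mobius (tq N) x)"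
  by (rule mob_hmul)

lemma ratio_simp: fixes w b :: H assumes "w \<noteq> 1" "b \<noteq> 0" shows "(w * b) * inverse ((w - 1) * b) = w * inverse (w - 1)"
proof -
  have "w - 1 \<noteq> 0" using assms by simp
  then show ?thesis using assms by (simp add: nonzero_inverse_mult_distrib mult.assoc mult_inv_cancel_left)
qed

definition good :: "Hm \<Rightarrow> hq \<Rightarrow> hq \<Rightarrow> hq \<Rightarrow> bool" where
  "good G p1 p2 p3 \<longleftrightarrow> inv_m G \<and> mobius (tq G) (pt 0) = p1 \<and> mobius (tq G) Inf = p2 \<and> mobius (tq G) (pt 1) = p3 \<and>
   (\<forall>X a a'. is_sph X \<longrightarrow> a \<in> X \<longrightarrow> a' \<in> X \<longrightarrow> a \<noteq> a' \<longrightarrow> sp (mobius (tq G) ` Fin ` X)) \<and>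
   (\<forall>w. w \<noteq> 0 \<longrightarrow> w \<noteq> 1 \<longrightarrow> crossratio p1 p2 p3 (mobius (tq G) (pt w)) = toq (w * inverse (w - 1)))"

lemma normalizer_Inf:
  assumes "x1 \<noteq> x3"
  shows "\<exists>G. good G (pt x1) Inf (pt x3)"
proof -
  define b where "b = x3 - x1"
  have b: "b \<noteq> 0" using assms by (simp add: b_def)
  define G where "G = hmul (Tm x1) (Rm b)"
  have iG: "inv_m G" unfolding G_def by (intro inv_m_mul inv_Tm inv_Rm b)
  have mG: "mobius (tq G) (pt x) = pt (x * b + x1)" for x
    unfolding G_def mob_comp[OF inv_Rm[OF b]] by (simp add: mob_Rm(1)[OF b] mob_Rm(2) mob_Tm)
  have mGI: "mobius (tq G) Inf = Inf"
    unfolding G_def mob_comp[OF inv_Rm[OF b]] by (simp add: mob_Rm(1)[OF b] mob_Rm(2) mob_Tm)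
  have img: "mobius (tq G) ` Fin ` X = Fin ` ((\<lambda>y. rmL b y + toq x1) ` X)" for X
    by (auto simp: image_image Fin_pt mG) (auto simp: pt_def rmL_def toq_add)
  show ?thesis unfolding good_def
  proof (intro exI[of _ G] conjI allI impI)
    show "inv_m G" by (rule iG)
    show "mobius (tq G) (pt 0) = pt x1" by (simp add: mG)
    show "mobius (tq G) Inf = Inf" by (rule mGI)
    show "mobius (tq G) (pt 1) = pt x3" by (simp add: mG b_def)
    fix X :: "quat set" and a a' assume "is_sph X"
    then have "is_sph ((\<lambda>y. rmL b y + toq x1) ` X)" by (rule sph_aff[OF _ b])
    then show "sp (mobius (tq G) ` Fin ` X)" unfolding sp_def is_2sphere_iff img by blast
  next
    fix w :: H assume w: "w \<noteq> 0" "w \<noteq> 1"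
    have e: "w * b + x1 - x3 = (w - 1) * b" by (simp add: b_def algebra_simps)
    show "crossratio (pt x1) Inf (pt x3) (mobius (tq G) (pt w)) = toq (w * inverse (w - 1))"
      using w b by (simp add: mG cr_fIff e ratio_simp)
  qed
qed


lemma qq_surj: "p \<noteq> pt f \<Longrightarrow> \<exists>z. qq f z = p"
proof (cases "p = Inf")
  case True then show ?thesis by (intro exI[of _ 0]) (simp add: qq_def)
next
  case False
  assume pf: "p \<noteq> pt f"
  obtain x where x: "p = pt x" using hq_fin[OF False] by blast
  then have "x - f \<noteq> 0" using pf by auto
  then show ?thesis using x by (intro exI[of _ "inverse (x - f)"]) (simp add: qq_def)
qed

lemma normalizer_fin:
  assumes d: "p1 \<noteq> p3" "p1 \<noteq> pt f" "p3 \<noteq> pt f"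
  shows "\<exists>G. good G p1 (pt f) p3"
proof -
  obtain z1 where z1: "qq f z1 = p1" using qq_surj[OF d(2)] by blast
  obtain z3 where z3: "qq f z3 = p3" using qq_surj[OF d(3)] by blast
  have z13: "z1 \<noteq> z3" using z1 z3 d(1) by auto
  define c where "c = z1"
  define b where "b = z3 - z1"
  have b: "b \<noteq> 0" using z13 by (simp add: b_def)
  define N1 where "N1 = hmul (Tm c) (Rm b)"
  define N2 where "N2 = hmul Jm N1"
  define G where "G = hmul (Tm f) N2"
  have i1: "inv_m N1" unfolding N1_def by (intro inv_m_mul inv_Tm inv_Rm b)
  have i2: "inv_m N2" unfolding N2_def by (intro inv_m_mul inv_Jm i1)
  have iG: "inv_m G" unfolding G_def by (intro inv_m_mul inv_Tm i2)
  have mN1: "mobius (tq N1) (pt x) = pt (x * b + c)" for x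
    unfolding N1_def mob_comp[OF inv_Rm[OF b]] by (simp add: mob_Rm(1)[OF b] mob_Tm)
  have mN1I: "mobius (tq N1) Inf = Inf"
    unfolding N1_def mob_comp[OF inv_Rm[OF b]] by (simp add: mob_Rm(2) mob_Tm)
  have mGf: "mobius (tq G) x = mobius (tq (Tm f)) (mobius (tq Jm) (mobius (tq N1) x))" for x
    unfolding G_def mob_comp[OF i2] unfolding N2_def mob_comp[OF i1] ..
  have mG: "mobius (tq G) (pt x) = qq f (x * b + c)" for x
    by (simp add: mGf mN1 mob_Jm mob_Tm qq_def)
  have mGI: "mobius (tq G) Inf = pt f"
    by (simp add: mGf mN1I mob_Jm mob_Tm)
  have imgN1: "mobius (tq N1) ` Fin ` X = Fin ` ((\<lambda>y. rmL b y + toq c) ` X)" for X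
    by (auto simp: image_image Fin_pt mN1) (auto simp: pt_def rmL_def toq_add)
  have img: "mobius (tq G) ` Fin ` X = mobius (tq (Tm f)) ` mobius (tq Jm) ` Fin ` ((\<lambda>y. rmL b y + toq c) ` X)" for X
    unfolding imgN1[symmetric] by (simp add: image_image mGf)
  have sR: "simil (rmL b) (nrm b)" by (rule simil_rm[OF b])
  show ?thesis unfolding good_def
  proof (intro exI[of _ G] conjI allI impI)
    show "inv_m G" by (rule iG)
    show "mobius (tq G) (pt 0) = p1" using z1 by (simp add: mG c_def)
    show "mobius (tq G) Inf = pt f" by (rule mGI)
    show "mobius (tq G) (pt 1) = p3" using z3 by (simp add: mG c_def b_def)
    fix X :: "quat set" and a a' assume X: "is_sph X" and a: "a \<in> X" "a' \<in> X" "a \<noteq> a'"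
    have Y: "is_sph ((\<lambda>y. rmL b y + toq c) ` X)" by (rule sph_aff[OF X b])
    have ne: "rmL b a + toq c \<noteq> rmL b a' + toq c" using a(3) simil.inj[OF sR] by (metis add_right_cancel injD)
    have "sp (mobius (tq Jm) ` Fin ` ((\<lambda>y. rmL b y + toq c) ` X))"
      by (rule sp_Jm[OF Y _ _ ne]) (use a in auto)
    then show "sp (mobius (tq G) ` Fin ` X)" unfolding img by (rule sp_Tm)
  next
    fix w :: H assume w: "w \<noteq> 0" "w \<noteq> 1"
    have mb: "- b \<noteq> 0" using b by simp
    have e1: "z1 - (w * b + c) = w * (- b)" by (simp add: c_def)
    have e3: "z3 - (w * b + c) = (w - 1) * (- b)" by (simp add: c_def b_def algebra_simps)
    have n1: "z1 \<noteq> w * b + c" using e1 w b by (metis mult_eq_0_iff neg_equal_0_iff_equal right_minus_eq)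
    have n3: "z3 \<noteq> w * b + c" using e3 w b by (metis mult_eq_0_iff neg_equal_0_iff_equal right_minus_eq)
    have "crossratio p1 (pt f) p3 (mobius (tq G) (pt w)) = toq ((z1 - (w * b + c)) * inverse (z3 - (w * b + c)))"
      unfolding mG z1[symmetric] z3[symmetric] by (rule cr_qq[OF z13 n1 n3])
    also have "\<dots> = toq (w * inverse (w - 1))" unfolding e1 e3 using ratio_simp[OF w(2) mb] by simp
    finally show "crossratio p1 (pt f) p3 (mobius (tq G) (pt w)) = toq (w * inverse (w - 1))" .
  qed
qed

lemma normalizer:
  assumes "distinct [p1, p2, p3]"
  shows "\<exists>G. good G p1 p2 p3"
proof (cases "p2 = Inf")
  case True
  then obtain x1 x3 where "p1 = pt x1" "p3 = pt x3" using assms hq_fin by (metis distinct_length_2_or_more)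
  moreover have "x1 \<noteq> x3" using assms calculation by auto
  ultimately show ?thesis using normalizer_Inf True by blast
next
  case False
  then obtain f where "p2 = pt f" using hq_fin by blast
  then show ?thesis using normalizer_fin assms by auto
qed


lemma stab:
  assumes "mobius (tq K) (pt 0) = pt 0" "mobius (tq K) Inf = Inf" "mobius (tq K) (pt 1) = pt 1"
  shows "\<exists>a. a \<noteq> 0 \<and> (\<forall>x. mobius (tq K) (pt x) = pt (a * x * inverse a))"
proof -
  obtain A B C D where K: "K = (A, B, C, D)" by (cases K) auto
  have C: "C = 0" using assms(2) by (simp add: K mob_Inf del: mobius.simps split: if_splits)
  have D: "D \<noteq> 0" using assms(1) by (auto simp: K C mob_pt del: mobius.simps split: if_splits)
  have B: "B = 0" using assms(1) D by (simp add: K C mob_pt del: mobius.simps)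
  have "A * inverse D = 1" using assms(3) D by (simp add: K C B mob_pt del: mobius.simps)
  then have A: "A = D" using D by (metis mult.assoc left_inverse mult_1_right mult_1_left)
  show ?thesis using D
    by (intro exI[of _ D]) (simp add: K A B C mob_pt del: mobius.simps)
qed

lemma rl_ratio:
  fixes w :: H
  assumes "w \<noteq> 1"
  shows "rl (w * inverse (w - 1)) \<longleftrightarrow> rl w"
proof
  assume "rl w"
  then obtain r where r: "w = ofr r" by (auto simp: rl_iff)
  have w1: "w - 1 = ofr (r - 1)" by (simp add: r ofr_diff)
  have "w * inverse (w - 1) = ofr (r * inverse (r - 1))"
    unfolding w1 by (simp add: r ofr_mult ofr_inverse)
  then show "rl (w * inverse (w - 1))" by (auto simp: rl_iff)
next
  assume "rl (w * inverse (w - 1))"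
  then obtain s where s: "w * inverse (w - 1) = ofr s" by (auto simp: rl_iff)
  have w1: "w - 1 \<noteq> 0" using assms by simp
  have "w = w * inverse (w - 1) * (w - 1)" using w1 by (simp add: mult.assoc)
  then have ws: "w = ofr s * (w - 1)" by (simp only: s)
  have om: "ofr (- s) = - ofr s" using ofr_diff[of 0 s] by simp
  have "ofr (1 - s) * w = w - ofr s * w" by (simp add: ofr_diff algebra_simps)
  also have "\<dots> = ofr s * (w - 1) - ofr s * w" using ws by simp
  also have "\<dots> = ofr (- s)" by (simp add: om algebra_simps)
  finally have e: "ofr (1 - s) * w = ofr (- s)" .
  have "1 - s \<noteq> 0"
  proof
    assume "1 - s = 0" then have "ofr (- s) = 0" using e by simp
    then show False using \<open>1 - s = 0\<close> by simp
  qed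
  then have n: "ofr (1 - s) \<noteq> 0" by simp
  have "w = inverse (ofr (1 - s)) * (ofr (1 - s) * w)" using n by (simp add: inv_mult_cancel_left)
  also have "\<dots> = ofr (inverse (1 - s) * (- s))" unfolding e by (simp only: ofr_mult ofr_inverse)
  finally have "w = ofr (inverse (1 - s) * (- s))" .
  then show "rl w" by (auto simp: rl_iff)
qed


lemma orb_is_sph:
  assumes "\<not> rl w"
  shows "is_sph (toq ` orb w)"
proof -
  define A where "A = {y::quat. Re (fst y) = Re (fst (toq w))}"
  have A': "A = {y. (1, 0) \<bullet> y = Re (fst (toq w))}" unfolding A_def by (auto simp: inner_prod_def)
  have "(1::complex, 0::complex) \<noteq> 0" by (simp add: zero_prod_def)
  then have aA: "affine A" "aff_dim A = int DIM(quat) - 1" unfolding A' by (simp_all add: affine_hyperplane)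
  have cA: "toq (re w) \<in> A" by (simp add: A_def re_def toq_ofr)
  have r: "nrm (w - re w) > 0" using rl_re[OF assms] by (simp add: nrm_def)
  show ?thesis unfolding is_sph_def orb_sphere[OF assms] A_def[symmetric]
    using aA cA r by blast
qed

lemma inv_pair:
  assumes "inv_m M"
  obtains M' where "inv_m M'" "\<And>x. mobius (tq M) (mobius (tq M') x) = x" "\<And>x. mobius (tq M') (mobius (tq M) x) = x"
proof -
  obtain M' where M': "hmul M M' = hid" "hmul M' M = hid" using assms unfolding inv_m_def by blast
  have iM': "inv_m M'" unfolding inv_m_def using M' by blast
  show ?thesis
  proof (rule that[OF iM'])
    fix x
    show "mobius (tq M) (mobius (tq M') x) = x" using mob_comp[OF iM', of M x] M'(1) mob_hid by simp
    show "mobius (tq M') (mobius (tq M) x) = x" using mob_comp[OF assms, of M' x] M'(2) mob_hid by simp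
  qed
qed

theorem mainTheorem2:
  fixes q1 q2 q3 q4 p1 p2 p3 :: hq
  assumes "distinct [q1, q2, q3, q4]" and "distinct [p1, p2, p3]"
  defines "S \<equiv> {mobius g q4 | g. g \<in> GL2H \<and> mobius g q1 = p1 \<and> mobius g q2 = p2 \<and> mobius g q3 = p3}"
  shows "(is_2sphere S \<or> is_2plane S \<or> (\<exists>p. S = {p}))
         \<and> ((\<exists>p. S = {p}) \<longleftrightarrow> is_real_quat (crossratio q1 q2 q3 q4))"
proof -
  obtain G where G: "good G p1 p2 p3" using normalizer[OF assms(2)] by blast
  have dq: "distinct [q1, q2, q3]" using assms(1) by auto
  obtain Hq where Hq: "good Hq q1 q2 q3" using normalizer[OF dq] by blast
  have iG: "inv_m G" and iH: "inv_m Hq" using G Hq by (auto simp: good_def)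
  obtain G' where G': "inv_m G'" "\<And>x. mobius (tq G) (mobius (tq G') x) = x" "\<And>x. mobius (tq G') (mobius (tq G) x) = x"
    using inv_pair[OF iG] by blast
  obtain H' where H': "inv_m H'" "\<And>x. mobius (tq Hq) (mobius (tq H') x) = x" "\<And>x. mobius (tq H') (mobius (tq Hq) x) = x"
    using inv_pair[OF iH] by blast
  have G0: "mobius (tq G) (pt 0) = p1" and GI: "mobius (tq G) Inf = p2" and G1: "mobius (tq G) (pt 1) = p3"
    using G by (auto simp: good_def)
  have H0: "mobius (tq Hq) (pt 0) = q1" and HI: "mobius (tq Hq) Inf = q2" and H1: "mobius (tq Hq) (pt 1) = q3"
    using Hq by (auto simp: good_def)
  define v where "v = mobius (tq H') q4"
  have q4v: "q4 = mobius (tq Hq) v" using H'(2) v_def by simp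
  have "v \<noteq> Inf" using q4v HI assms(1) by auto
  then obtain w where w: "v = pt w" using hq_fin by blast
  have w0: "w \<noteq> 0" using q4v H0 assms(1) w by auto
  have w1: "w \<noteq> 1" using q4v H1 assms(1) w by auto
  have q4w: "q4 = mobius (tq Hq) (pt w)" using q4v w by simp
  have CR: "crossratio q1 q2 q3 q4 = toq (w * inverse (w - 1))"
    using Hq w0 w1 unfolding good_def q4w by blast
  have CRr: "is_real_quat (crossratio q1 q2 q3 q4) \<longleftrightarrow> rl w"
    unfolding CR rl_def[symmetric] using rl_ratio[OF w1] .
  have Hinv0: "mobius (tq H') q1 = pt 0" using H'(3) H0 by metis
  have HinvI: "mobius (tq H') q2 = Inf" using H'(3) HI by metis
  have Hinv1: "mobius (tq H') q3 = pt 1" using H'(3) H1 by metis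
  have Hinv4: "mobius (tq H') q4 = pt w" using v_def w by simp
  have Seq: "S = mobius (tq G) ` pt ` orb w"
  proof (intro equalityI subsetI)
    fix x assume "x \<in> S"
    then obtain g where g: "x = mobius g q4" "g \<in> GL2H" "mobius g q1 = p1" "mobius g q2 = p2" "mobius g q3 = p3"
      unfolding S_def by blast
    define M where "M = oq g"
    have gM: "g = tq M" by (simp add: M_def)
    have iM: "inv_m M" using g(2) gM GL2H_iff by simp
    define K where "K = hmul G' (hmul M Hq)"
    have mK: "mobius (tq K) y = mobius (tq G') (mobius (tq M) (mobius (tq Hq) y))" for y
      unfolding K_def mob_comp[OF inv_m_mul[OF iM iH]] mob_comp[OF iH] ..
    have "mobius (tq K) (pt 0) = pt 0" using mK g(3) gM H0 G'(3) G0 by metis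
    moreover have "mobius (tq K) Inf = Inf" using mK g(4) gM HI G'(3) GI by metis
    moreover have "mobius (tq K) (pt 1) = pt 1" using mK g(5) gM H1 G'(3) G1 by metis
    ultimately obtain a where a: "a \<noteq> 0" "\<And>x. mobius (tq K) (pt x) = pt (a * x * inverse a)"
      using stab by blast
    have "x = mobius (tq G) (mobius (tq K) (pt w))" using g(1) gM q4w mK G'(2) by simp
    also have "\<dots> = mobius (tq G) (pt (a * w * inverse a))" using a(2) by simp
    finally show "x \<in> mobius (tq G) ` pt ` orb w" using a(1) by (auto simp: orb_def)
  next
    fix x assume "x \<in> mobius (tq G) ` pt ` orb w"
    then obtain a where a: "a \<noteq> 0" "x = mobius (tq G) (pt (a * w * inverse a))" by (auto simp: orb_def)
    define M where "M = hmul G (hmul (Km a) H')"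
    have iM: "inv_m M" unfolding M_def by (intro inv_m_mul iG inv_Km a(1) H'(1))
    have mM: "mobius (tq M) y = mobius (tq G) (mobius (tq (Km a)) (mobius (tq H') y))" for y
      unfolding M_def mob_comp[OF inv_m_mul[OF inv_Km[OF a(1)] H'(1)]] mob_comp[OF H'(1)] ..
    have "tq M \<in> GL2H" using iM GL2H_iff by simp
    moreover have "mobius (tq M) q1 = p1" using mM Hinv0 mob_Km(1)[OF a(1)] G0 by simp
    moreover have "mobius (tq M) q2 = p2" using mM HinvI mob_Km(2) GI by simp
    moreover have "mobius (tq M) q3 = p3" using mM Hinv1 mob_Km(1)[OF a(1)] G1 a(1) by simp
    moreover have "mobius (tq M) q4 = x" using mM Hinv4 mob_Km(1)[OF a(1)] a(2) by simp
    ultimately show "x \<in> S" unfolding S_def by blast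
  qed
  show ?thesis
  proof (cases "rl w")
    case True
    then have "S = {mobius (tq G) (pt w)}" unfolding Seq orb_real[OF True] by simp
    then show ?thesis using CRr True by blast
  next
    case False
    let ?m = "re w + re w - w"
    have X: "is_sph (toq ` orb w)" by (rule orb_is_sph[OF False])
    have ptF: "pt ` orb w = Fin ` (toq ` orb w)" by (auto simp: pt_def image_image)
    have wm: "toq w \<in> toq ` orb w" "toq ?m \<in> toq ` orb w" "toq w \<noteq> toq ?m"
      using orb_mirror[OF False] orb_real by (auto simp: orb_def intro!: image_eqI exI[of _ 1])
    have spS: "sp S" unfolding Seq ptF using G X wm unfolding good_def by blast
    have "\<not> (\<exists>p. S = {p})"
    proof
      assume "\<exists>p. S = {p}"
      then obtain p where p: "S = {p}" by blast
      have wo: "w \<in> orb w" unfolding orb_def by (rule CollectI, rule exI[of _ 1]) simp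
      have "mobius (tq G) (pt w) \<in> S" "mobius (tq G) (pt ?m) \<in> S"
        unfolding Seq using orb_mirror(1)[OF False] wo by (auto intro!: imageI)
      then have "mobius (tq G) (pt w) = mobius (tq G) (pt ?m)" using p by simp
      then have "w = ?m" using G'(3) by (metis pt_inj)
      then show False using orb_mirror(2)[OF False] by simp
    qed
    then show ?thesis using spS CRr False unfolding sp_def by blast
  qed
qed


end
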